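(* Let $N_t$ be a simple point process on $[0,\infty)$ with $N_0=0$, arrival times $0<\tau_1<\tau_2<\cdots$ and inter-arrival times $T_i=\tau_i-\tau_{i-1}$ ($\tau_0=0$). Let $p>0$ and let i.i.d. claims $C_i$ be given, and suppose Assumption A1 holds. Then for any fixed $\epsilon,\epsilon'>0$ there exists a constant $M>0$ such that $$\mathbb{P}\left(\bigcap_{n=1}^{\infty}\left\{p\sum_{i=1}^{n}T_i\le n\left(\frac{p}{\mu}+\epsilon\right)+M\right\}\right)>1-\epsilon'.$$
   Context: Assumption A1: (i) $(N_t/t\in\cdot)$ satisfies a large deviation principle (as $t\to\infty$) with a rate function $I$ such that $I(x)=0$ if and only if $x=\mu$ (for some $\mu>0$); (ii) $I$ is increasing on $[\mu,\infty)$ and decreasing on $[0,\mu]$; (iii) the net profit condition $\rho:=\mu\mathbb{E}[C_1]/p<1$ holds; (iv) there exists $\theta>0$ such that $\mathbb{E}[e^{\theta\sum_{i=1}^n T_i}]<\infty$ for every $n\in\mathbb{N}$. Here $C_i$ are i.i.d. nonnegative claim sizes with finite mean, independent of $N$, and $p>0$ is the premium rate. *)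

theory Defs
  imports "HOL-Probability.Probability"
begin

definition arrival :: "(nat \<Rightarrow> 'a \<Rightarrow> real) \<Rightarrow> nat \<Rightarrow> 'a \<Rightarrow> real" where
  "arrival T n \<omega> = (\<Sum>i=1..n. T i \<omega>)"

definition count_proc :: "(nat \<Rightarrow> 'a \<Rightarrow> real) \<Rightarrow> real \<Rightarrow> 'a \<Rightarrow> nat" where
  "count_proc T t \<omega> = card {n. 1 \<le> n \<and> arrival T n \<omega> \<le> t}"

definition elog :: "real \<Rightarrow> ereal" where
  "elog x = (if x \<le> 0 then - \<infinity> else ereal (ln x))"

definition rate_function :: "(real \<Rightarrow> ereal) \<Rightarrow> bool" where
  "rate_function I \<longleftrightarrow> (\<forall>x. 0 \<le> I x) \<and> (\<forall>c. closed {x. I x \<le> ereal c})"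

definition LDP :: "(real \<Rightarrow> real measure) \<Rightarrow> (real \<Rightarrow> ereal) \<Rightarrow> bool" where
  "LDP P I \<longleftrightarrow> rate_function I \<and>
     (\<forall>F. closed F \<longrightarrow>
        Limsup at_top (\<lambda>t. ereal (1/t) * elog (measure (P t) F)) \<le> - (INF x\<in>F. I x)) \<and>
     (\<forall>G. open G \<longrightarrow>
        - (INF x\<in>G. I x) \<le> Liminf at_top (\<lambda>t. ereal (1/t) * elog (measure (P t) G)))"

end

theory Submission imports Defs begin
lemma arrival_Suc: "arrival T (Suc n) w = arrival T n w + T (Suc n) w"
  unfolding arrival_def by simp

lemma arrival_0: "arrival T 0 w = 0"
  unfolding arrival_def by simp

lemma arrival_smono:
  assumes "\<And>i. i \<ge> 1 \<Longrightarrow> T i w > 0"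
  shows "strict_mono (\<lambda>n. arrival T n w)"
  by (rule strict_mono_Suc_iff[THEN iffD2]) (use assms in \<open>auto simp: arrival_Suc\<close>)

lemma card_set_eq:
  fixes f :: "nat \<Rightarrow> real"
  assumes "strict_mono f" "f k \<le> t" "t < f (Suc k)"
  shows "card {n. 1 \<le> n \<and> f n \<le> t} = k"
proof -
  have "{n. 1 \<le> n \<and> f n \<le> t} = {1..k}"
  proof (safe)
    fix n assume "1 \<le> n" "f n \<le> t"
    show "n \<in> {1..k}"
    proof (rule ccontr)
      assume "n \<notin> {1..k}"
      then have "Suc k \<le> n" using \<open>1 \<le> n\<close> by auto
      then have "f (Suc k) \<le> f n" using assms(1) by (simp add: strict_mono_less_eq)
      then show False using assms \<open>f n \<le> t\<close> by linarith
    qed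
  next
    fix n assume "n \<in> {1..k}"
    then have "f n \<le> f k" using assms(1) by (simp add: strict_mono_less_eq)
    then show "f n \<le> t" using assms by linarith
  qed auto
  then show ?thesis by simp
qed

lemma card_set_exists:
  fixes f :: "nat \<Rightarrow> real"
  assumes "f 0 \<le> t" "filterlim f at_top sequentially"
  shows "\<exists>k. f k \<le> t \<and> t < f (Suc k)"
proof -
  have "eventually (\<lambda>n. f n > t) sequentially"
    using assms(2) by (simp add: filterlim_at_top_dense)
  then obtain n where n: "t < f n" by (auto simp: eventually_sequentially)
  define m where "m = (LEAST n. t < f n)"
  have m: "t < f m" unfolding m_def by (rule LeastI, rule n)
  have "m \<noteq> 0"
  proof
    assume "m = 0" with m assms(1) show False by simp
  qed
  then obtain k where k: "m = Suc k" by (cases m) auto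
  have "\<not> t < f k" using not_less_Least[of k "\<lambda>n. t < f n"] k m_def by auto
  then show ?thesis using m k not_less by blast
qed

lemma card_set_le:
  fixes f :: "nat \<Rightarrow> real"
  assumes "strict_mono f" "t < f n"
  shows "card {k. 1 \<le> k \<and> f k \<le> t} \<le> n"
proof -
  have "{k. 1 \<le> k \<and> f k \<le> t} \<subseteq> {1..n}"
  proof safe
    fix k assume "1 \<le> k" "f k \<le> t"
    show "k \<in> {1..n}"
    proof (rule ccontr)
      assume "k \<notin> {1..n}"
      then have "n < k" using \<open>1 \<le> k\<close> by auto
      then have "f n < f k" using assms(1) by (simp add: strict_mono_less)
      then show False using assms \<open>f k \<le> t\<close> by linarith
    qed
  qed
  then show ?thesis by (metis card_atLeastAtMost card_mono diff_Suc_1 finite_atLeastAtMost)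
qed
theorem lemma1:
  fixes Pr :: "'a measure"
    and T :: "nat \<Rightarrow> 'a \<Rightarrow> real"
    and C :: "nat \<Rightarrow> 'a \<Rightarrow> real"
    and I :: "real \<Rightarrow> ereal"
    and p \<mu> \<epsilon> \<epsilon>' :: real
  assumes "prob_space Pr"
    \<comment> \<open>simple point process on [0,\<infinity>) with inter-arrival times T_1, T_2, ...\<close>
    and T_rv: "\<And>i. i \<ge> 1 \<Longrightarrow> T i \<in> borel_measurable Pr"
    and T_pos: "\<And>i \<omega>. i \<ge> 1 \<Longrightarrow> \<omega> \<in> space Pr \<Longrightarrow> T i \<omega> > 0"
    and loc_finite: "\<And>\<omega>. \<omega> \<in> space Pr \<Longrightarrow> filterlim (\<lambda>n. arrival T n \<omega>) at_top sequentially"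
    \<comment> \<open>premium rate and i.i.d. nonnegative claims with finite mean, independent of N\<close>
    and p_pos: "p > 0"
    and C_indep: "prob_space.indep_vars Pr (\<lambda>_. borel) C {1..}"
    and C_ident: "\<And>i. i \<ge> 1 \<Longrightarrow> distr Pr borel (C i) = distr Pr borel (C 1)"
    and C_rv: "\<And>i. i \<ge> 1 \<Longrightarrow> C i \<in> borel_measurable Pr"
    and C_nonneg: "\<And>i \<omega>. i \<ge> 1 \<Longrightarrow> \<omega> \<in> space Pr \<Longrightarrow> C i \<omega> \<ge> 0"
    and C_int: "integrable Pr (C 1)"
    and C_N_indep: "prob_space.indep_set Pr
        (sets (vimage_algebra (space Pr) (\<lambda>\<omega> (i::nat). if i \<ge> 1 then C i \<omega> else 0)
                 (Pi\<^sub>M UNIV (\<lambda>_. borel))))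
        (sets (vimage_algebra (space Pr) (\<lambda>\<omega> (t::real). real (count_proc T t \<omega>))
                 (Pi\<^sub>M UNIV (\<lambda>_. borel))))"
    \<comment> \<open>Assumption A1\<close>
    and A1_i_LDP: "LDP (\<lambda>t. distr Pr borel (\<lambda>\<omega>. real (count_proc T t \<omega>) / t)) I"
    and A1_i_zero: "\<And>x. I x = 0 \<longleftrightarrow> x = \<mu>"
    and mu_pos: "\<mu> > 0"
    and A1_ii_inc: "mono_on {\<mu>..} I"
    and A1_ii_dec: "antimono_on {0..\<mu>} I"
    and A1_iii: "\<mu> * prob_space.expectation Pr (C 1) / p < 1"
    and A1_iv: "\<exists>\<theta>>0. \<forall>n. integrable Pr (\<lambda>\<omega>. exp (\<theta> * arrival T n \<omega>))"
    and eps_pos: "\<epsilon> > 0" and eps'_pos: "\<epsilon>' > 0"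
  shows "\<exists>M>0. measure Pr (\<Inter>n\<in>{1..}.
            {\<omega> \<in> space Pr. p * arrival T n \<omega> \<le> real n * (p / \<mu> + \<epsilon>) + M}) > 1 - \<epsilon>'"
proof -
  interpret P: prob_space Pr by fact
  define a where "a = 1/\<mu> + \<epsilon>/p"
  have a_pos: "a > 0" unfolding a_def using mu_pos eps_pos p_pos by (simp add: add_pos_pos)
  have qa: "1/a < \<mu>"
  proof -
    have "1/\<mu> < a" unfolding a_def using eps_pos p_pos by simp
    then show ?thesis using mu_pos a_pos by (simp add: field_simps)
  qed
  have arr_meas[measurable]: "(\<lambda>w. arrival T n w) \<in> borel_measurable Pr" for n
    unfolding arrival_def by (intro borel_measurable_sum) (auto intro: T_rv)
  have smono: "strict_mono (\<lambda>n. arrival T n w)" if "w \<in> space Pr" for w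
    by (rule arrival_smono) (use T_pos that in auto)
  have cnt_eq: "count_proc T t w = k \<longleftrightarrow> arrival T k w \<le> t \<and> t < arrival T (Suc k) w"
    if wsp: "w \<in> space Pr" and tnn: "t \<ge> 0" for w t k
  proof -
    obtain k' where k': "arrival T k' w \<le> t" "t < arrival T (Suc k') w"
      using card_set_exists[of "\<lambda>n. arrival T n w" t] loc_finite[OF wsp] tnn
      by (auto simp: arrival_0)
    have c: "count_proc T t w = k'" unfolding count_proc_def
      using card_set_eq[OF smono[OF wsp] k'] by simp
    show ?thesis
    proof
      assume "count_proc T t w = k"
      then show "arrival T k w \<le> t \<and> t < arrival T (Suc k) w" using c k' by simp
    next
      assume h: "arrival T k w \<le> t \<and> t < arrival T (Suc k) w"
      show "count_proc T t w = k" unfolding count_proc_def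
        using card_set_eq[OF smono[OF wsp]] h by simp
    qed
  qed
  have cnt_meas: "(\<lambda>w. count_proc T t w) \<in> measurable Pr (count_space UNIV)" if "t \<ge> 0" for t
  proof -
    have "(\<lambda>w. count_proc T t w) -` {k} \<inter> space Pr
       = {w \<in> space Pr. arrival T k w \<le> t \<and> t < arrival T (Suc k) w}" for k
      using cnt_eq[OF _ that] by auto
    moreover have "{w \<in> space Pr. arrival T k w \<le> t \<and> t < arrival T (Suc k) w} \<in> sets Pr" for k
      by measurable
    ultimately show ?thesis
      by (subst measurable_count_space_eq2_countable) auto
  qed
  define X where "X t w = real (count_proc T t w) / t" for t w
  have X_meas: "X t \<in> borel_measurable Pr" if "t \<ge> 0" for t
  proof -
    have "(\<lambda>k::nat. real k / t) \<circ> (\<lambda>w. count_proc T t w) \<in> borel_measurable Pr"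
      by (rule measurable_comp[OF cnt_meas[OF that]]) simp
    then show ?thesis unfolding X_def comp_def by simp
  qed
  have rf: "rate_function I" and upper: "\<And>F. closed F \<Longrightarrow>
        Limsup at_top (\<lambda>t. ereal (1/t) * elog (measure (distr Pr borel (X t)) F)) \<le> - (INF x\<in>F. I x)"
    using A1_i_LDP unfolding LDP_def X_def by auto
  have I_nn: "0 \<le> I x" for x using rf unfolding rate_function_def by auto
  have Iq: "0 < I (1/a)" using I_nn[of "1/a"] A1_i_zero[of "1/a"] qa by (auto simp: le_less)
  have INFq: "I (1/a) \<le> (INF x\<in>{0..1/a}. I x)"
  proof (rule INF_greatest)
    fix x assume x: "x \<in> {0..1/a}"
    show "I (1/a) \<le> I x"
      by (rule monotone_onD[OF A1_ii_dec]) (use x qa a_pos in auto)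
  qed
  obtain d where d: "0 < ereal d" "ereal d < I (1/a)" using ereal_dense2[OF Iq] by blast
  have dpos: "d > 0" using d by simp
  have "Limsup at_top (\<lambda>t. ereal (1/t) * elog (measure (distr Pr borel (X t)) {0..1/a})) < - ereal d"
  proof -
    have "Limsup at_top (\<lambda>t. ereal (1/t) * elog (measure (distr Pr borel (X t)) {0..1/a})) \<le> - (INF x\<in>{0..1/a}. I x)"
      by (rule upper) simp
    also have "\<dots> \<le> - I (1/a)" using INFq by simp
    also have "\<dots> < - ereal d" using d(2) ereal_uminus_less_reorder by (metis ereal_uminus_uminus)
    finally show ?thesis .
  qed
  from Limsup_lessD[OF this] obtain t0 where t0:
    "\<And>t. t \<ge> t0 \<Longrightarrow> ereal (1/t) * elog (measure (distr Pr borel (X t)) {0..1/a}) < - ereal d"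
    by (auto simp: eventually_at_top_linorder)
  have tail: "measure Pr {w \<in> space Pr. X t w \<in> {0..1/a}} \<le> exp (- d * t)" if t: "t \<ge> max t0 1" for t
  proof -
    have "measure (distr Pr borel (X t)) {0..1/a} = measure Pr (X t -` {0..1/a} \<inter> space Pr)"
      by (rule measure_distr) (use X_meas t in auto)
    also have "X t -` {0..1/a} \<inter> space Pr = {w \<in> space Pr. X t w \<in> {0..1/a}}" by auto
    finally have eq: "measure (distr Pr borel (X t)) {0..1/a} = measure Pr {w \<in> space Pr. X t w \<in> {0..1/a}}" .
    define P0 where "P0 = measure Pr {w \<in> space Pr. X t w \<in> {0..1/a}}"
    have lt: "ereal (1/t) * elog P0 < - ereal d" using t0[of t] t eq P0_def by simp
    show ?thesis
    proof (cases "P0 > 0")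
      case False
      then show ?thesis unfolding P0_def[symmetric] by (simp add: order.trans[OF _ less_imp_le[OF exp_gt_zero]])
    next
      case True
      then have "ereal (ln P0 / t) < ereal (- d)" using lt by (simp add: elog_def)
      then have "ln P0 / t < - d" by simp
      then have "ln P0 < - d * t" using t by (simp add: field_simps)
      then have "exp (ln P0) < exp (- d * t)" by simp
      then show ?thesis using True unfolding P0_def[symmetric] by simp
    qed
  qed
  define B where "B n = {w \<in> space Pr. real n * a < arrival T n w}" for n
  have B_sets[measurable]: "B n \<in> sets Pr" for n unfolding B_def by measurable
  define N1 where "N1 = nat \<lceil>max t0 1 / a\<rceil> + 1"
  define r where "r = exp (- d * a)"
  have r: "0 < r" "r < 1" unfolding r_def using dpos a_pos by auto
  have Bbound: "measure Pr (B n) \<le> r ^ n" if n: "n \<ge> N1" for n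
  proof -
    have "max t0 1 / a \<le> real N1" unfolding N1_def by linarith
    then have "max t0 1 \<le> real N1 * a" using a_pos by (simp add: field_simps)
    moreover have "real N1 * a \<le> real n * a" using n a_pos by simp
    ultimately have tn: "real n * a \<ge> max t0 1" by linarith
    have n1: "n \<ge> 1" using n unfolding N1_def by simp
    have "B n \<subseteq> {w \<in> space Pr. X (real n * a) w \<in> {0..1/a}}"
    proof safe
      fix w assume w: "w \<in> B n"
      then have wsp: "w \<in> space Pr" unfolding B_def by auto
      have "count_proc T (real n * a) w \<le> n" unfolding count_proc_def
        by (rule card_set_le[OF smono[OF wsp]]) (use w in \<open>auto simp: B_def\<close>)
      then have "real (count_proc T (real n * a) w) / (real n * a) \<le> real n / (real n * a)"
        using a_pos n1 by (intro divide_right_mono) auto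
      also have "\<dots> = 1 / a" using n1 by simp
      finally show "X (real n * a) w \<in> {0..1/a}" unfolding X_def using a_pos by auto
      show "w \<in> space Pr" by fact
    qed
    then have "measure Pr (B n) \<le> measure Pr {w \<in> space Pr. X (real n * a) w \<in> {0..1/a}}"
    proof (rule P.finite_measure_mono)
      have "{w \<in> space Pr. X (real n * a) w \<in> {0..1/a}} = X (real n * a) -` {0..1/a} \<inter> space Pr" by auto
      also have "\<dots> \<in> sets Pr" by (rule measurable_sets[OF X_meas]) (use a_pos in auto)
      finally show "{w \<in> space Pr. X (real n * a) w \<in> {0..1/a}} \<in> sets Pr" .
    qed
    also have "\<dots> \<le> exp (- d * (real n * a))" by (rule tail[OF tn])
    also have "\<dots> = r ^ n" unfolding r_def by (subst exp_of_nat_mult[symmetric]) (simp add: algebra_simps)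
    finally show ?thesis .
  qed
  have "eventually (\<lambda>n. r ^ n < \<epsilon>' * (1 - r) / 2) sequentially"
    using LIMSEQ_power_zero[of r] r eps'_pos
    by (intro order_tendstoD(2)) (auto simp: abs_less_iff)
  then obtain n1 where n1: "\<And>n. n \<ge> n1 \<Longrightarrow> r ^ n < \<epsilon>' * (1 - r) / 2"
    by (auto simp: eventually_sequentially)
  define n0 where "n0 = max n1 N1"
  have geo: "(\<lambda>n. r ^ (n + n0)) sums (r ^ n0 / (1 - r))"
  proof -
    have "(\<lambda>n. r ^ n0 * r ^ n) sums (r ^ n0 * (1 / (1 - r)))"
      by (rule sums_mult, rule geometric_sums) (use r in auto)
    then show ?thesis by (simp add: power_add mult.commute)
  qed
  have sumB: "summable (\<lambda>n. measure Pr (B (n + n0)))"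
    by (rule summable_comparison_test'[OF sums_summable[OF geo], of 0])
       (use Bbound in \<open>auto simp: n0_def\<close>)
  have tailB: "measure Pr (\<Union>n. B (n + n0)) < \<epsilon>' / 2"
  proof -
    have "measure Pr (\<Union>n. B (n + n0)) \<le> (\<Sum>n. measure Pr (B (n + n0)))"
      by (rule P.finite_measure_subadditive_countably) (auto intro: sumB)
    also have "\<dots> \<le> (\<Sum>n. r ^ (n + n0))"
      by (rule suminf_le[OF _ sumB sums_summable[OF geo]]) (use Bbound in \<open>auto simp: n0_def\<close>)
    also have "\<dots> = r ^ n0 / (1 - r)" using geo by (simp add: sums_iff)
    also have "\<dots> < \<epsilon>' / 2" using n1[of n0] r by (simp add: n0_def field_simps)
    finally show ?thesis .
  qed
  define A where "A M n = {w \<in> space Pr. real n * (p / \<mu> + \<epsilon>) + M < p * arrival T n w}" for M n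
  have A_sets[measurable]: "A M n \<in> sets Pr" for M n unfolding A_def by measurable
  define U where "U m = (\<Union>n\<in>{1..<n0}. A (real m + 1) n)" for m :: nat
  have U_sets: "U m \<in> sets Pr" for m unfolding U_def by auto
  have U_dec: "decseq U"
    unfolding decseq_def U_def A_def by auto
  have U_empty: "(\<Inter>m. U m) = {}"
  proof (rule ccontr)
    assume "(\<Inter>m. U m) \<noteq> {}"
    then obtain w where w: "\<And>m. w \<in> U m" by auto
    define m where "m = nat \<lceil>\<Sum>n\<in>{1..<n0}. \<bar>p * arrival T n w\<bar>\<rceil>"
    from w[of m] obtain n where n: "n \<in> {1..<n0}" "w \<in> A (real m + 1) n" unfolding U_def by auto
    have "\<bar>p * arrival T n w\<bar> \<le> (\<Sum>n\<in>{1..<n0}. \<bar>p * arrival T n w\<bar>)"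
      by (rule member_le_sum) (use n in auto)
    also have "\<dots> \<le> real m" unfolding m_def by linarith
    finally have "p * arrival T n w \<le> real m" by linarith
    moreover have "0 \<le> real n * (p / \<mu> + \<epsilon>)" using p_pos mu_pos eps_pos by simp
    ultimately show False using n(2) unfolding A_def by auto
  qed
  have "(\<lambda>m. measure Pr (U m)) \<longlonglongrightarrow> measure Pr (\<Inter>m. U m)"
    by (rule P.finite_Lim_measure_decseq) (use U_sets U_dec in auto)
  then have "(\<lambda>m. measure Pr (U m)) \<longlonglongrightarrow> 0" using U_empty by simp
  then have "eventually (\<lambda>m. measure Pr (U m) < \<epsilon>' / 2) sequentially"
    by (rule order_tendstoD(2)) (use eps'_pos in simp)
  then obtain m where m: "measure Pr (U m) < \<epsilon>' / 2" by (auto simp: eventually_sequentially)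
  define M where "M = real m + 1"
  define S where "S = (\<Inter>n\<in>{1..}. {w \<in> space Pr. p * arrival T n w \<le> real n * (p / \<mu> + \<epsilon>) + M})"
  have S_eq: "S = space Pr - (\<Union>n\<in>{1..}. A M n)" unfolding S_def A_def by (auto; force)
  have S_sets: "S \<in> sets Pr" unfolding S_eq by auto
  have sub: "space Pr - S \<subseteq> U m \<union> (\<Union>n. B (n + n0))"
  proof
    fix w assume "w \<in> space Pr - S"
    then obtain n where n: "n \<ge> 1" "w \<in> A M n" unfolding S_eq by auto
    show "w \<in> U m \<union> (\<Union>n. B (n + n0))"
    proof (cases "n < n0")
      case True
      then show ?thesis using n unfolding U_def M_def by auto
    next
      case False
      have "real n * (p / \<mu> + \<epsilon>) = p * (real n * a)" unfolding a_def using p_pos mu_pos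
        by (simp add: field_simps)
      moreover have "M > 0" unfolding M_def by simp
      ultimately have "p * (real n * a) < p * arrival T n w" using n(2) unfolding A_def by (auto simp: algebra_simps)
      then have "real n * a < arrival T n w" using p_pos by simp
      then have "w \<in> B (n - n0 + n0)" using False n(2) unfolding B_def A_def by auto
      then show ?thesis by blast
    qed
  qed
  have "measure Pr (space Pr - S) \<le> measure Pr (U m \<union> (\<Union>n. B (n + n0)))"
    by (rule P.finite_measure_mono[OF sub]) (auto intro: U_sets)
  also have "\<dots> \<le> measure Pr (U m) + measure Pr (\<Union>n. B (n + n0))"
    by (rule measure_Un_le) (auto intro: U_sets)
  also have "\<dots> < \<epsilon>'" using m tailB by linarith
  finally have "measure Pr (space Pr - S) < \<epsilon>'" .
  then have "measure Pr S > 1 - \<epsilon>'" using P.prob_compl[OF S_sets] by simp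
  then show ?thesis unfolding S_def M_def by (intro exI[of _ "real m + 1"]) auto
qed
end
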